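(* Let $V$ be a complex Banach space, $H$ a commutative monoid generated by $\varpi_1,\dots,\varpi_n$, and $h\mapsto T_h$ a monoid homomorphism into the bounded operators on $V$ with $T_e=\mathrm{id}_V$; put $T_j=T_{\varpi_j}$. Let $\chi$ be a character of $\mathbb C[X_1,\dots,X_n]$, $\lambda_i=\chi(X_i)$, and suppose there is $h\in H^\circ$ with a representation $h=\sum_i\ell_i\varpi_i$ ($\ell_i\in\mathbb N_0$) such that $|\prod_i\lambda_i^{\ell_i}|>r_{\mathrm{ess}}(T_h)$. Then $\chi$ is a Fredholm character, i.e. $\dim_{\mathbb C}\mathrm{Tor}_i^{\mathbb C[X]}(\mathbb C_\chi,V_T)<\infty$ for all $i$ and $=0$ for all but finitely many $i$.
   Context: $H^\circ=\{h\in H:T_h$ quasi-compact$\}$; $T$ is quasi-compact if $r_{\mathrm{ess}}(T)<r(T)$ (spectral radius), where $r_{\mathrm{ess}}(T)=\inf\{r>0:\lambda-T$ Fredholm of index zero for all $|\lambda|\ge r\}$. $V_T$ is $V$ as a $\mathbb C[X]$-module with $X_j$ acting by $T_j$; $\mathrm{Tor}_p^{\mathbb C[X]}(\mathbb C_\chi,V_T)$ is the $p$-th homology of the Koszul complex $\Lambda^p\mathbb C^n\otimes V\to\Lambda^{p-1}\mathbb C^n\otimes V$, $e_{i_1}\wedge\dots\wedge e_{i_p}\otimes x\mapsto\sum_k(-1)^ke_{i_1}\wedge\cdots\widehat{e_{i_k}}\cdots\wedge e_{i_p}\otimes(T_{i_k}-\lambda_{i_k})x$. *)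

theory Defs
  imports "HOL-Analysis.Analysis" "HOL-Library.Function_Algebras"
begin

definition complex_structure :: "(complex \<Rightarrow> 'v::banach \<Rightarrow> 'v) \<Rightarrow> bool" where
  "complex_structure smul \<longleftrightarrow>
     (\<forall>r x. smul (complex_of_real r) x = r *\<^sub>R x) \<and>
     (\<forall>a x y. smul a (x + y) = smul a x + smul a y) \<and>
     (\<forall>a b x. smul (a + b) x = smul a x + smul b x) \<and>
     (\<forall>a b x. smul (a * b) x = smul a (smul b x)) \<and>
     (\<forall>a x. norm (smul a x) = cmod a * norm x)"

definition bounded_clin :: "(complex \<Rightarrow> 'v::banach \<Rightarrow> 'v) \<Rightarrow> ('v \<Rightarrow> 'v) \<Rightarrow> bool" where
  "bounded_clin smul A \<longleftrightarrow> bounded_linear A \<and> (\<forall>c x. A (smul c x) = smul c (A x))"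

definition cspan :: "(complex \<Rightarrow> 'b::comm_monoid_add \<Rightarrow> 'b) \<Rightarrow> 'b set \<Rightarrow> 'b set" where
  "cspan sc S = {\<Sum>x\<in>F. sc (a x) x | F a. finite F \<and> F \<subseteq> S}"

text \<open>For subspaces B \<subseteq> Z: the quotient Z/B is finite dimensional, and its dimension
  (= least cardinality of a subset of Z spanning Z modulo B).\<close>
definition qspans :: "(complex \<Rightarrow> 'b::ab_group_add \<Rightarrow> 'b) \<Rightarrow> 'b set \<Rightarrow> 'b set \<Rightarrow> 'b set \<Rightarrow> bool" where
  "qspans sc B Z F \<longleftrightarrow> finite F \<and> F \<subseteq> Z \<and> Z \<subseteq> {b + v | b v. b \<in> B \<and> v \<in> cspan sc F}"

definition qfin :: "(complex \<Rightarrow> 'b::ab_group_add \<Rightarrow> 'b) \<Rightarrow> 'b set \<Rightarrow> 'b set \<Rightarrow> bool" where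
  "qfin sc B Z \<longleftrightarrow> (\<exists>F. qspans sc B Z F)"

definition qdim :: "(complex \<Rightarrow> 'b::ab_group_add \<Rightarrow> 'b) \<Rightarrow> 'b set \<Rightarrow> 'b set \<Rightarrow> nat" where
  "qdim sc B Z = (LEAST k. \<exists>F. qspans sc B Z F \<and> card F = k)"

definition fredholm_index0 :: "(complex \<Rightarrow> 'v::banach \<Rightarrow> 'v) \<Rightarrow> ('v \<Rightarrow> 'v) \<Rightarrow> bool" where
  "fredholm_index0 smul A \<longleftrightarrow>
     qfin smul {0} {x. A x = 0} \<and> qfin smul (range A) UNIV \<and>
     qdim smul {0} {x. A x = 0} = qdim smul (range A) UNIV"

definition spectrum_op :: "(complex \<Rightarrow> 'v::banach \<Rightarrow> 'v) \<Rightarrow> ('v \<Rightarrow> 'v) \<Rightarrow> complex set" where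
  "spectrum_op smul T = {z. \<not> bij (\<lambda>x. smul z x - T x)}"

definition spec_rad :: "(complex \<Rightarrow> 'v::banach \<Rightarrow> 'v) \<Rightarrow> ('v \<Rightarrow> 'v) \<Rightarrow> real" where
  "spec_rad smul T = Sup (cmod ` spectrum_op smul T)"

definition ess_rad :: "(complex \<Rightarrow> 'v::banach \<Rightarrow> 'v) \<Rightarrow> ('v \<Rightarrow> 'v) \<Rightarrow> real" where
  "ess_rad smul T = Inf {r. r > 0 \<and> (\<forall>z. cmod z \<ge> r \<longrightarrow> fredholm_index0 smul (\<lambda>x. smul z x - T x))}"

definition quasi_compact :: "(complex \<Rightarrow> 'v::banach \<Rightarrow> 'v) \<Rightarrow> ('v \<Rightarrow> 'v) \<Rightarrow> bool" where
  "quasi_compact smul T \<longleftrightarrow> ess_rad smul T < spec_rad smul T"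

definition msum :: "(nat \<Rightarrow> 'h::comm_monoid_add) \<Rightarrow> (nat \<Rightarrow> nat) \<Rightarrow> nat \<Rightarrow> 'h" where
  "msum w l n = (\<Sum>i<n. \<Sum>k<l i. w i)"

text \<open>Koszul complex: \<Lambda>^p C^n \<otimes> V is represented by coefficient functions on the
  p-element subsets of {0..<n} (basis e_I, I increasing), vanishing elsewhere.\<close>
definition kchains :: "nat \<Rightarrow> nat \<Rightarrow> (nat set \<Rightarrow> 'v::zero) set" where
  "kchains n p = {c. \<forall>J. c J \<noteq> 0 \<longrightarrow> J \<subseteq> {..<n} \<and> card J = p}"

definition kdiff :: "(complex \<Rightarrow> 'v::banach \<Rightarrow> 'v) \<Rightarrow> (nat \<Rightarrow> 'v \<Rightarrow> 'v) \<Rightarrow> (nat \<Rightarrow> complex) \<Rightarrow> nat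
                    \<Rightarrow> (nat set \<Rightarrow> 'v) \<Rightarrow> (nat set \<Rightarrow> 'v)" where
  "kdiff smul Tj lam n c = (\<lambda>J. \<Sum>i\<in>{..<n} - J.
      ((-1) ^ (card {j\<in>J. j < i} + 1)) *\<^sub>R (Tj i (c (insert i J)) - smul (lam i) (c (insert i J))))"

definition cscale :: "(complex \<Rightarrow> 'v \<Rightarrow> 'v) \<Rightarrow> complex \<Rightarrow> (nat set \<Rightarrow> 'v) \<Rightarrow> (nat set \<Rightarrow> 'v)" where
  "cscale smul a c = (\<lambda>J. smul a (c J))"

definition kcycles :: "(complex \<Rightarrow> 'v::banach \<Rightarrow> 'v) \<Rightarrow> (nat \<Rightarrow> 'v \<Rightarrow> 'v) \<Rightarrow> (nat \<Rightarrow> complex) \<Rightarrow> nat \<Rightarrow> nat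
                     \<Rightarrow> (nat set \<Rightarrow> 'v) set" where
  "kcycles smul Tj lam n p = {c \<in> kchains n p. kdiff smul Tj lam n c = 0}"

definition kbounds :: "(complex \<Rightarrow> 'v::banach \<Rightarrow> 'v) \<Rightarrow> (nat \<Rightarrow> 'v \<Rightarrow> 'v) \<Rightarrow> (nat \<Rightarrow> complex) \<Rightarrow> nat \<Rightarrow> nat
                     \<Rightarrow> (nat set \<Rightarrow> 'v) set" where
  "kbounds smul Tj lam n p = kdiff smul Tj lam n ` kchains n (Suc p)"

definition tor_fin :: "(complex \<Rightarrow> 'v::banach \<Rightarrow> 'v) \<Rightarrow> (nat \<Rightarrow> 'v \<Rightarrow> 'v) \<Rightarrow> (nat \<Rightarrow> complex) \<Rightarrow> nat \<Rightarrow> nat \<Rightarrow> bool" where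
  "tor_fin smul Tj lam n p = qfin (cscale smul) (kbounds smul Tj lam n p) (kcycles smul Tj lam n p)"

definition tor_dim :: "(complex \<Rightarrow> 'v::banach \<Rightarrow> 'v) \<Rightarrow> (nat \<Rightarrow> 'v \<Rightarrow> 'v) \<Rightarrow> (nat \<Rightarrow> complex) \<Rightarrow> nat \<Rightarrow> nat \<Rightarrow> nat" where
  "tor_dim smul Tj lam n p = qdim (cscale smul) (kbounds smul Tj lam n p) (kcycles smul Tj lam n p)"

definition fredholm_character :: "(complex \<Rightarrow> 'v::banach \<Rightarrow> 'v) \<Rightarrow> (nat \<Rightarrow> 'v \<Rightarrow> 'v) \<Rightarrow> (nat \<Rightarrow> complex) \<Rightarrow> nat \<Rightarrow> bool" where
  "fredholm_character smul Tj lam n \<longleftrightarrow>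
     (\<forall>p. tor_fin smul Tj lam n p) \<and> finite {p. tor_dim smul Tj lam n p \<noteq> 0}"

end

theory Submission
  imports Defs
begin


lemma fun_sum_apply: "(sum f A) x = sum (\<lambda>a. f a x) A"
  by (induct A rule: infinite_finite_induct) auto

locale cvs =
  fixes smul :: "complex \<Rightarrow> 'v::banach \<Rightarrow> 'v"
  assumes cs: "complex_structure smul"
begin

lemma smul_real: "smul (complex_of_real r) x = r *\<^sub>R x"
  using cs unfolding complex_structure_def by blast
lemma smul_add: "smul a (x + y) = smul a x + smul a y"
  using cs unfolding complex_structure_def by blast
lemma smul_ladd: "smul (a + b) x = smul a x + smul b x"
  using cs unfolding complex_structure_def by blast
lemma smul_smul: "smul a (smul b x) = smul (a * b) x"
  using cs unfolding complex_structure_def by metis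
lemma norm_smul: "norm (smul a x) = cmod a * norm x"
  using cs unfolding complex_structure_def by blast
lemma smul_one: "smul 1 x = x"
  using smul_real[of 1 x] by simp

sublocale V: vector_space smul
  by unfold_locales (auto simp: smul_add smul_ladd smul_smul smul_one)

lemma scaleR_smul: "r *\<^sub>R x = smul (complex_of_real r) x"
  by (simp add: smul_real)

lemma cscale_apply: "cscale smul a c J = smul a (c J)"
  by (simp add: cscale_def)

sublocale C: vector_space "cscale smul"
  by unfold_locales (auto simp: cscale_def fun_eq_iff V.scale_right_distrib V.scale_left_distrib)

lemma cspan_V: "cspan smul S = V.span S"
  unfolding cspan_def V.span_explicit by blast
lemma cspan_C: "cspan (cscale smul) S = C.span S"
  unfolding cspan_def C.span_explicit by blast

definition clin :: "('v \<Rightarrow> 'v) \<Rightarrow> bool" where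
  "clin A \<longleftrightarrow> (\<forall>x y. A (x + y) = A x + A y) \<and> (\<forall>a x. A (smul a x) = smul a (A x))"

lemma clin_add: "clin A \<Longrightarrow> A (x + y) = A x + A y" by (simp add: clin_def)
lemma clin_smul: "clin A \<Longrightarrow> A (smul a x) = smul a (A x)" by (simp add: clin_def)
lemma clin_zero: "clin A \<Longrightarrow> A 0 = 0"
  using clin_add[of A 0 0] by simp
lemma clin_diff: "clin A \<Longrightarrow> A (x - y) = A x - A y"
  using clin_add[of A "x - y" y] by (simp add: algebra_simps)
lemma clin_scaleR: "clin A \<Longrightarrow> A (r *\<^sub>R x) = r *\<^sub>R A x"
  by (simp add: scaleR_smul clin_smul)
lemma clin_sum: "clin A \<Longrightarrow> A (sum f S) = sum (\<lambda>i. A (f i)) S"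
  using sum_comp_morphism[of A f S] by (simp add: clin_zero clin_add o_def)

lemma clin_comp: "clin A \<Longrightarrow> clin B \<Longrightarrow> clin (A \<circ> B)"
  by (simp add: clin_def)
lemma clin_minus: "clin A \<Longrightarrow> clin B \<Longrightarrow> clin (\<lambda>x. A x - B x)"
  by (simp add: clin_def V.scale_right_diff_distrib)
lemma clin_smul_op: "clin (smul a)"
  by (simp add: clin_def smul_add smul_smul mult.commute)
lemma clin_id: "clin id" by (simp add: clin_def)
lemma bounded_clin_clin: "bounded_clin smul A \<Longrightarrow> clin A"
  unfolding bounded_clin_def clin_def using linear_add[of A] bounded_linear.linear by blast

end

definition lift :: "('v \<Rightarrow> 'v) \<Rightarrow> (nat set \<Rightarrow> 'v) \<Rightarrow> (nat set \<Rightarrow> 'v)" where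
  "lift A c = (\<lambda>J. A (c J))"

definition sg :: "nat \<Rightarrow> nat set \<Rightarrow> real" where
  "sg i K = (-1) ^ (card {j\<in>K. j < i} + 1)"

lemma sg_sq: "sg i K * sg i K = 1"
  by (simp add: sg_def flip: power_add)

lemma card_insert_less:
  fixes K :: "nat set"
  assumes "i \<notin> K"
  shows "card {j\<in>insert i K. j < k} = card {j\<in>K. j < k} + (if i < k then 1 else 0)"
proof -
  have f: "finite {j\<in>K. j < k}" by simp
  show ?thesis
  proof (cases "i < k")
    case True
    then have "{j\<in>insert i K. j < k} = insert i {j\<in>K. j < k}" by auto
    then show ?thesis using True f assms by simp
  next
    case False
    then have "{j\<in>insert i K. j < k} = {j\<in>K. j < k}" by auto
    then show ?thesis using False by simp
  qed
qed

lemma sg_swap: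
  assumes "i \<noteq> k" "i \<notin> K" "k \<notin> K"
  shows "sg k (insert i K) * sg i (insert k K) = - (sg k K * sg i K)"
proof -
  have "(if i < k then 1 else 0) + (if k < i then 1 else (0::nat)) = 1" using assms(1) by auto
  then show ?thesis
    unfolding sg_def card_insert_less[OF assms(2)] card_insert_less[OF assms(3)]
    by (cases "i < k") (auto simp: power_add)
qed

locale kz = cvs smul for smul :: "complex \<Rightarrow> 'v::banach \<Rightarrow> 'v" +
  fixes Tj :: "nat \<Rightarrow> 'v \<Rightarrow> 'v" and lam :: "nat \<Rightarrow> complex" and n :: nat
  assumes Tlin: "\<And>i. clin (Tj i)"
    and Tcomm: "\<And>i k x. Tj i (Tj k x) = Tj k (Tj i x)"
begin

definition S :: "nat \<Rightarrow> 'v \<Rightarrow> 'v" where "S i x = Tj i x - smul (lam i) x"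

abbreviation d where "d \<equiv> kdiff smul Tj lam n"

definition hs :: "nat \<Rightarrow> (nat set \<Rightarrow> 'v) \<Rightarrow> (nat set \<Rightarrow> 'v)" where
  "hs i c = (\<lambda>J. if i \<in> J then sg i (J - {i}) *\<^sub>R c (J - {i}) else 0)"

lemma S_clin: "clin (S i)"
proof -
  have "clin (\<lambda>x. Tj i x - smul (lam i) x)" by (rule clin_minus[OF Tlin clin_smul_op])
  then show ?thesis by (simp add: S_def[abs_def])
qed

lemma d_alt: "d c J = (\<Sum>i\<in>{..<n} - J. sg i J *\<^sub>R S i (c (insert i J)))"
  by (simp add: kdiff_def sg_def S_def)

lemma d_add: "d (c1 + c2) = d c1 + d c2"
  by (rule ext) (simp add: d_alt clin_add[OF S_clin] scaleR_add_right sum.distrib)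

lemma d_zero: "d 0 = 0"
  by (rule ext) (simp add: d_alt clin_zero[OF S_clin])

lemma d_cscale: "d (cscale smul a c) = cscale smul a (d c)"
  by (rule ext) (simp add: d_alt cscale_def clin_sum[OF clin_smul_op] clin_smul[OF S_clin]
      scaleR_smul smul_smul mult.commute)

lemma d_diff: "d (c1 - c2) = d c1 - d c2"
  using d_add[of "c1 - c2" c2] by simp

lemma d_sum: "d (sum f B) = sum (\<lambda>b. d (f b)) B"
  using sum_comp_morphism[of d f B] by (simp add: d_zero d_add o_def)

lemma lift_add: "clin A \<Longrightarrow> lift A (c1 + c2) = lift A c1 + lift A c2"
  by (simp add: lift_def fun_eq_iff clin_add)
lemma lift_diff: "clin A \<Longrightarrow> lift A (c1 - c2) = lift A c1 - lift A c2"
  by (simp add: lift_def fun_eq_iff clin_diff)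
lemma lift_zero: "clin A \<Longrightarrow> lift A 0 = 0"
  by (simp add: lift_def fun_eq_iff clin_zero)
lemma lift_cscale: "clin A \<Longrightarrow> lift A (cscale smul a c) = cscale smul a (lift A c)"
  by (simp add: lift_def fun_eq_iff clin_smul cscale_def)
lemma lift_sum: "clin A \<Longrightarrow> lift A (sum f B) = sum (\<lambda>b. lift A (f b)) B"
  using sum_comp_morphism[of "lift A" f B] by (simp add: lift_zero lift_add o_def)

lemma d_lift:
  assumes A: "clin A" and comm: "\<And>i x. A (Tj i x) = Tj i (A x)"
  shows "d (lift A c) = lift A (d c)"
proof -
  have AS: "A (S i x) = S i (A x)" for i x
    by (simp add: S_def clin_diff[OF A] clin_smul[OF A] comm)
  show ?thesis
    by (rule ext) (simp add: d_alt lift_def clin_sum[OF A] clin_scaleR[OF A] AS)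
qed

lemma d_chains:
  assumes "c \<in> kchains n (Suc p)"
  shows "d c \<in> kchains n p"
  unfolding kchains_def
proof (intro CollectI allI impI)
  fix J assume "d c J \<noteq> 0"
  then obtain i where i: "i \<in> {..<n} - J" "c (insert i J) \<noteq> 0"
    unfolding d_alt by (metis (no_types, lifting) clin_zero[OF S_clin] scaleR_zero_right sum.neutral)
  then have "insert i J \<subseteq> {..<n} \<and> card (insert i J) = Suc p"
    using assms unfolding kchains_def by blast
  then have "insert i J \<subseteq> {..<n}" "card (insert i J) = Suc p" by auto
  moreover have "finite (insert i J)" using \<open>insert i J \<subseteq> {..<n}\<close> by (rule finite_subset) simp
  then have "finite J" by simp
  moreover have "i \<notin> J" using i by blast
  ultimately have "card J = p" by simp
  then show "J \<subseteq> {..<n} \<and> card J = p" using \<open>insert i J \<subseteq> {..<n}\<close> by blast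
qed

lemma hs_chains:
  assumes "i < n" "c \<in> kchains n p"
  shows "hs i c \<in> kchains n (Suc p)"
  unfolding kchains_def
proof (intro CollectI allI impI)
  fix J assume "hs i c J \<noteq> 0"
  then have iJ: "i \<in> J" and c: "c (J - {i}) \<noteq> 0" by (auto simp: hs_def split: if_splits)
  then have "J - {i} \<subseteq> {..<n} \<and> card (J - {i}) = p" using assms unfolding kchains_def by blast
  then have "J - {i} \<subseteq> {..<n}" "card (J - {i}) = p" by auto
  moreover have "finite (J - {i})" using \<open>J - {i} \<subseteq> {..<n}\<close>
    by (rule finite_subset) simp
  then have fJ: "finite J" by simp
  have "card J = Suc p" using card.remove[OF fJ iJ] \<open>card (J - {i}) = p\<close> by simp
  moreover have "J \<subseteq> {..<n}" using \<open>J - {i} \<subseteq> {..<n}\<close> iJ assms(1) by blast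
  ultimately show "J \<subseteq> {..<n} \<and> card J = Suc p" by blast
qed

end


context kz begin

lemma S_scaleR: "S k (r *\<^sub>R x) = r *\<^sub>R S k x"
  by (rule clin_scaleR[OF S_clin])

lemma homotopy:
  assumes i: "i < n" and z: "z \<in> kchains n p" and dz: "d z = 0"
  shows "d (hs i z) = lift (S i) z"
proof (rule ext)
  fix J
  show "d (hs i z) J = lift (S i) z J"
  proof (cases "i \<in> J")
    case False
    have "d (hs i z) J = (\<Sum>k\<in>{..<n} - J. sg k J *\<^sub>R S k (hs i z (insert k J)))" by (rule d_alt)
    also have "\<dots> = (\<Sum>k\<in>{i}. sg k J *\<^sub>R S k (hs i z (insert k J)))"
      by (rule sum.mono_neutral_right) (use False i in \<open>auto simp: hs_def clin_zero[OF S_clin]\<close>)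
    also have "\<dots> = sg i J *\<^sub>R (sg i J *\<^sub>R S i (z J))"
      using False by (simp add: hs_def S_scaleR insert_Diff_if)
    also have "\<dots> = S i (z J)" by (simp add: sg_sq)
    finally show ?thesis by (simp add: lift_def)
  next
    case True
    define J' where "J' = J - {i}"
    have J: "J = insert i J'" and iJ': "i \<notin> J'" using True by (auto simp: J'_def)
    have split: "{..<n} - J' = insert i ({..<n} - J)" using True i by (auto simp: J'_def)
    have fin: "finite ({..<n} - J)" by simp
    have "0 = d z J'" using dz by simp
    also have "\<dots> = (\<Sum>k\<in>{..<n} - J'. sg k J' *\<^sub>R S k (z (insert k J')))" by (rule d_alt)
    also have "\<dots> = sg i J' *\<^sub>R S i (z J) + (\<Sum>k\<in>{..<n} - J. sg k J' *\<^sub>R S k (z (insert k J')))"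
      unfolding split using fin by (simp add: J)
    finally have eq0: "(\<Sum>k\<in>{..<n} - J. sg k J' *\<^sub>R S k (z (insert k J'))) = - (sg i J' *\<^sub>R S i (z J))"
      by (simp add: eq_neg_iff_add_eq_0 add.commute)
    have "d (hs i z) J = (\<Sum>k\<in>{..<n} - J. sg k J *\<^sub>R S k (hs i z (insert k J)))" by (rule d_alt)
    also have "\<dots> = (\<Sum>k\<in>{..<n} - J. (- sg i J') *\<^sub>R (sg k J' *\<^sub>R S k (z (insert k J'))))"
    proof (rule sum.cong[OF refl])
      fix k assume k: "k \<in> {..<n} - J"
      then have ki: "k \<noteq> i" "k \<notin> J'" using True by (auto simp: J'_def)
      have "insert k J - {i} = insert k J'" using ki by (auto simp: J'_def)
      then have "hs i z (insert k J) = sg i (insert k J') *\<^sub>R z (insert k J')"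
        using True by (simp add: hs_def)
      then have "sg k J *\<^sub>R S k (hs i z (insert k J)) = (sg k (insert i J') * sg i (insert k J')) *\<^sub>R S k (z (insert k J'))"
        by (simp add: S_scaleR J)
      also have "\<dots> = (- (sg k J' * sg i J')) *\<^sub>R S k (z (insert k J'))"
        using sg_swap[of i k J'] ki iJ' by simp
      finally show "sg k J *\<^sub>R S k (hs i z (insert k J)) = (- sg i J') *\<^sub>R (sg k J' *\<^sub>R S k (z (insert k J')))"
        by (simp add: mult.commute)
    qed
    also have "\<dots> = (- sg i J') *\<^sub>R (\<Sum>k\<in>{..<n} - J. sg k J' *\<^sub>R S k (z (insert k J')))"
      by (simp add: scaleR_sum_right)
    also have "\<dots> = (sg i J' * sg i J') *\<^sub>R S i (z J)" unfolding eq0 by simp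
    also have "\<dots> = S i (z J)" by (simp add: sg_sq)
    finally show ?thesis by (simp add: lift_def)
  qed
qed
lemma chains_zero: "(0::nat set \<Rightarrow> 'v) \<in> kchains n p"
  by (simp add: kchains_def)
lemma chains_add: "(c1::nat set \<Rightarrow> 'v) \<in> kchains n p \<Longrightarrow> c2 \<in> kchains n p \<Longrightarrow> c1 + c2 \<in> kchains n p"
  unfolding kchains_def
proof (intro CollectI allI impI)
  fix J assume c1: "c1 \<in> {c. \<forall>J. c J \<noteq> 0 \<longrightarrow> J \<subseteq> {..<n} \<and> card J = p}"
    and c2: "c2 \<in> {c. \<forall>J. c J \<noteq> 0 \<longrightarrow> J \<subseteq> {..<n} \<and> card J = p}"
    and ne: "(c1 + c2) J \<noteq> 0"
  then have "c1 J \<noteq> 0 \<or> c2 J \<noteq> 0" by auto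
  then show "J \<subseteq> {..<n} \<and> card J = p" using c1 c2 by blast
qed
lemma chains_lift: "clin A \<Longrightarrow> c \<in> kchains n p \<Longrightarrow> lift A c \<in> kchains n p"
  unfolding kchains_def
proof (intro CollectI allI impI)
  fix J assume A: "clin A" and c: "c \<in> {c. \<forall>J. c J \<noteq> 0 \<longrightarrow> J \<subseteq> {..<n} \<and> card J = p}"
    and ne: "lift A c J \<noteq> 0"
  then have "c J \<noteq> 0" using clin_zero[OF A] by (auto simp: lift_def)
  then show "J \<subseteq> {..<n} \<and> card J = p" using c by blast
qed
lemma chains_cscale: "c \<in> kchains n p \<Longrightarrow> cscale smul a c \<in> kchains n p"
  using chains_lift[OF clin_smul_op, of c p a] by (simp add: lift_def cscale_def)
lemma chains_diff: "(c1::nat set \<Rightarrow> 'v) \<in> kchains n p \<Longrightarrow> c2 \<in> kchains n p \<Longrightarrow> c1 - c2 \<in> kchains n p"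
  using chains_add[of c1 p "cscale smul (-1) c2"] chains_cscale[of c2 p "-1"]
  by (simp add: C.scale_minus_left)
lemma chains_sum: "(\<And>b. b \<in> B \<Longrightarrow> (f b :: nat set \<Rightarrow> 'v) \<in> kchains n p) \<Longrightarrow> sum f B \<in> kchains n p"
  by (induct B rule: infinite_finite_induct) (auto intro: chains_zero chains_add)

definition Bd :: "nat \<Rightarrow> (nat set \<Rightarrow> 'v) set" where "Bd p = d ` kchains n (Suc p)"

lemma Bd_zero: "0 \<in> Bd p"
  unfolding Bd_def using d_zero chains_zero by (metis image_eqI)
lemma Bd_add: "b1 \<in> Bd p \<Longrightarrow> b2 \<in> Bd p \<Longrightarrow> b1 + b2 \<in> Bd p"
proof -
  assume "b1 \<in> Bd p" "b2 \<in> Bd p"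
  then obtain y1 y2 where "y1 \<in> kchains n (Suc p)" "y2 \<in> kchains n (Suc p)" "b1 = d y1" "b2 = d y2"
    unfolding Bd_def by blast
  then show ?thesis unfolding Bd_def using d_add[of y1 y2] chains_add[of y1 "Suc p" y2]
    by (intro image_eqI[of _ _ "y1 + y2"]) auto
qed
lemma Bd_cscale: "b \<in> Bd p \<Longrightarrow> cscale smul a b \<in> Bd p"
proof -
  assume "b \<in> Bd p"
  then obtain y where "y \<in> kchains n (Suc p)" "b = d y" unfolding Bd_def by blast
  then show ?thesis unfolding Bd_def using d_cscale[of a y] chains_cscale[of y "Suc p" a]
    by (intro image_eqI[of _ _ "cscale smul a y"]) auto
qed
lemma Bd_diff: "b1 \<in> Bd p \<Longrightarrow> b2 \<in> Bd p \<Longrightarrow> b1 - b2 \<in> Bd p"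
  using Bd_add[of b1 p "cscale smul (-1) b2"] Bd_cscale[of b2 p "-1"]
  by (simp add: C.scale_minus_left)
lemma Bd_sum: "(\<And>b. b \<in> B \<Longrightarrow> f b \<in> Bd p) \<Longrightarrow> sum f B \<in> Bd p"
  by (induct B rule: infinite_finite_induct) (auto intro: Bd_zero Bd_add)
lemma Bd_lift:
  assumes A: "clin A" and comm: "\<And>i x. A (Tj i x) = Tj i (A x)" and b: "b \<in> Bd p"
  shows "lift A b \<in> Bd p"
proof -
  obtain y where y: "y \<in> kchains n (Suc p)" "b = d y" using b unfolding Bd_def by blast
  have "lift A b = d (lift A y)" using d_lift[OF A comm] y by simp
  then show ?thesis unfolding Bd_def using chains_lift[OF A y(1)] by blast
qed

end

locale kzT = cvs smul for smul :: "complex \<Rightarrow> 'v::banach \<Rightarrow> 'v" +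
  fixes T :: "'h::comm_monoid_add \<Rightarrow> 'v \<Rightarrow> 'v" and w :: "nat \<Rightarrow> 'h" and lam :: "nat \<Rightarrow> complex" and n :: nat
  assumes Tclin: "\<And>h. clin (T h)" and T0: "T 0 = id" and Tadd: "\<And>a b. T (a + b) = T a \<circ> T b"
begin

lemma T_comm: "T a (T b x) = T b (T a x)"
  using Tadd[of a b] Tadd[of b a] by (metis add.commute comp_apply)

sublocale kz smul "\<lambda>j. T (w j)" lam n
  by unfold_locales (auto simp: Tclin T_comm)

definition Q :: "nat \<Rightarrow> 'h \<Rightarrow> complex \<Rightarrow> bool" where
  "Q p a \<mu> \<longleftrightarrow> (\<forall>z \<in> kcycles smul (\<lambda>j. T (w j)) lam n p. lift (T a) z - cscale smul \<mu> z \<in> Bd p)"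

lemma Q0: "Q p 0 1"
  unfolding Q_def by (simp add: T0 lift_def cscale_def smul_one Bd_zero)

lemma Qgen: "i < n \<Longrightarrow> Q p (w i) (lam i)"
  unfolding Q_def kcycles_def
proof safe
  fix z assume i: "i < n" and z: "z \<in> kchains n p" "d z = 0"
  have "lift (T (w i)) z - cscale smul (lam i) z = lift (S i) z"
    by (simp add: lift_def cscale_def S_def fun_eq_iff)
  also have "\<dots> = d (hs i z)" using homotopy[OF i z] by simp
  finally show "lift (T (w i)) z - cscale smul (lam i) z \<in> Bd p"
    unfolding Bd_def using hs_chains[OF i z(1)] by blast
qed

lemma Qmult:
  assumes a: "Q p a \<mu>" and b: "Q p b \<nu>"
  shows "Q p (a + b) (\<mu> * \<nu>)"
  unfolding Q_def
proof
  fix z assume z: "z \<in> kcycles smul (\<lambda>j. T (w j)) lam n p"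
  define \<beta> where "\<beta> = lift (T b) z - cscale smul \<nu> z"
  define \<alpha> where "\<alpha> = lift (T a) z - cscale smul \<mu> z"
  have \<beta>: "\<beta> \<in> Bd p" using b z unfolding Q_def \<beta>_def by blast
  have \<alpha>: "\<alpha> \<in> Bd p" using a z unfolding Q_def \<alpha>_def by blast
  have comm: "T a (T (w i) x) = T (w i) (T a x)" for i x by (rule T_comm)
  have e1: "lift (T b) z = cscale smul \<nu> z + \<beta>" by (simp add: \<beta>_def)
  have e2: "lift (T a) z = cscale smul \<mu> z + \<alpha>" by (simp add: \<alpha>_def)
  have "lift (T (a + b)) z = lift (T a) (lift (T b) z)" by (simp add: Tadd lift_def)
  also have "\<dots> = cscale smul \<nu> (lift (T a) z) + lift (T a) \<beta>"
    unfolding e1 by (simp add: lift_add[OF Tclin] lift_cscale[OF Tclin])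
  also have "\<dots> = cscale smul \<nu> (cscale smul \<mu> z) + cscale smul \<nu> \<alpha> + lift (T a) \<beta>"
    unfolding e2 by (simp add: C.scale_right_distrib)
  also have "cscale smul \<nu> (cscale smul \<mu> z) = cscale smul (\<mu> * \<nu>) z"
    by (simp add: mult.commute)
  finally have "lift (T (a + b)) z - cscale smul (\<mu> * \<nu>) z = cscale smul \<nu> \<alpha> + lift (T a) \<beta>"
    by (simp only: add.assoc add_diff_cancel_left')
  moreover have "cscale smul \<nu> \<alpha> + lift (T a) \<beta> \<in> Bd p"
    by (intro Bd_add Bd_cscale \<alpha> Bd_lift[OF Tclin _ \<beta>] comm)
  ultimately show "lift (T (a + b)) z - cscale smul (\<mu> * \<nu>) z \<in> Bd p" by simp
qed

lemma Qsum: "(\<And>i. i \<in> I \<Longrightarrow> Q p (f i) (g i)) \<Longrightarrow> Q p (sum f I) (prod g I)"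
  by (induct I rule: infinite_finite_induct) (auto intro: Q0 Qmult)

lemma Qmsum: "Q p (msum w l n) (\<Prod>i<n. lam i ^ l i)"
proof -
  have "Q p (\<Sum>i<n. \<Sum>k<l i. w i) (\<Prod>i<n. \<Prod>k<l i. lam i)"
    by (intro Qsum Qgen) auto
  then show ?thesis by (simp add: msum_def)
qed

end


context cvs begin

lemma qspans_transfer:
  assumes Bs: "C.subspace B" and fin: "finite G"
    and Z: "Z \<subseteq> {b + v | b v. b \<in> B \<and> v \<in> C.span G}"
  shows "\<exists>F. finite F \<and> F \<subseteq> Z \<and> Z \<subseteq> {b + v | b v. b \<in> B \<and> v \<in> C.span F}"
proof -
  define U where "U = {v \<in> C.span G. \<exists>b\<in>B. b + v \<in> Z}"
  obtain Bu where Bu: "Bu \<subseteq> U" "C.independent Bu" "U \<subseteq> C.span Bu"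
    using C.maximal_independent_subset[of U] by blast
  have "Bu \<subseteq> C.span G" using Bu(1) unfolding U_def by blast
  then have finBu: "finite Bu" using C.independent_span_bound[OF fin Bu(2)] by blast
  have "\<forall>u\<in>Bu. \<exists>b. b \<in> B \<and> b + u \<in> Z" using Bu(1) unfolding U_def by blast
  then obtain bb where bb: "\<And>u. u \<in> Bu \<Longrightarrow> bb u \<in> B \<and> bb u + u \<in> Z" by metis
  define F where "F = (\<lambda>u. bb u + u) ` Bu"
  have "Z \<subseteq> {b + v | b v. b \<in> B \<and> v \<in> C.span F}"
  proof
    fix z assume z: "z \<in> Z"
    then obtain b v where bv: "b \<in> B" "v \<in> C.span G" "z = b + v" using Z by blast
    then have "v \<in> U" unfolding U_def using z by blast
    then have "v \<in> C.span Bu" using Bu(3) by blast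
    then obtain r where r: "v = (\<Sum>u\<in>Bu. cscale smul (r u) u)"
      using C.span_finite[OF finBu] by blast
    have "(\<Sum>u\<in>Bu. cscale smul (r u) (bb u + u)) = (\<Sum>u\<in>Bu. cscale smul (r u) (bb u)) + v"
      unfolding r by (simp add: C.scale_right_distrib sum.distrib)
    then have ze: "z = (b - (\<Sum>u\<in>Bu. cscale smul (r u) (bb u))) + (\<Sum>u\<in>Bu. cscale smul (r u) (bb u + u))"
      using bv(3) by (simp add: algebra_simps)
    have "b - (\<Sum>u\<in>Bu. cscale smul (r u) (bb u)) \<in> B"
      using bb by (intro C.subspace_diff[OF Bs] bv(1) C.subspace_sum[OF Bs] C.subspace_scale[OF Bs]) auto
    moreover have "(\<Sum>u\<in>Bu. cscale smul (r u) (bb u + u)) \<in> C.span F"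
      unfolding F_def by (intro C.span_sum C.span_scale C.span_base) auto
    ultimately show "z \<in> {b + v | b v. b \<in> B \<and> v \<in> C.span F}" using ze by blast
  qed
  moreover have "finite F" "F \<subseteq> Z" using finBu bb unfolding F_def by auto
  ultimately show ?thesis by blast
qed

definition delta :: "nat set \<Rightarrow> 'v \<Rightarrow> (nat set \<Rightarrow> 'v)" where
  "delta J g = (\<lambda>K. if K = J then g else 0)"

definition Ps :: "nat \<Rightarrow> nat \<Rightarrow> nat set set" where
  "Ps n q = {J. J \<subseteq> {..<n} \<and> card J = q}"

lemma finite_Ps: "finite (Ps n q)"
  by (rule finite_subset[of _ "Pow {..<n}"]) (auto simp: Ps_def)

lemma delta_span:
  assumes "J \<in> P" "x \<in> V.span G"
  shows "delta J x \<in> C.span ((\<lambda>(J, g). delta J g) ` (P \<times> G))"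
  using assms(2)
proof (induct rule: V.span_induct_alt)
  case base
  have "delta J 0 = 0" by (simp add: delta_def fun_eq_iff)
  then show ?case using C.span_zero by metis
next
  case (step c x y)
  have "delta J (smul c x + y) = cscale smul c (delta J x) + delta J y"
    by (simp add: delta_def cscale_def fun_eq_iff V.scale_zero_right)
  moreover have "delta J x \<in> (\<lambda>(J, g). delta J g) ` (P \<times> G)" using assms(1) step(1) by force
  ultimately show ?case using step(2) by (metis C.span_add C.span_scale C.span_base)
qed

lemma chain_decomp:
  assumes "c \<in> kchains n q"
  shows "c = (\<Sum>J\<in>Ps n q. delta J (c J))"
proof (rule ext)
  fix K
  have "(\<Sum>J\<in>Ps n q. delta J (c J)) K = (\<Sum>J\<in>Ps n q. if K = J then c J else 0)"
    by (simp add: fun_sum_apply delta_def)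
  also have "\<dots> = (if K \<in> Ps n q then c K else 0)"
    using finite_Ps by (simp add: sum.delta)
  also have "\<dots> = c K" using assms by (auto simp: kchains_def Ps_def)
  finally show "c K = (\<Sum>J\<in>Ps n q. delta J (c J)) K" by simp
qed

lemma chain_span:
  assumes "c \<in> kchains n q" "\<And>J. c J \<in> V.span G"
  shows "c \<in> C.span ((\<lambda>(J, g). delta J g) ` (Ps n q \<times> G))"
proof -
  have "(\<Sum>J\<in>Ps n q. delta J (c J)) \<in> C.span ((\<lambda>(J, g). delta J g) ` (Ps n q \<times> G))"
    by (rule C.span_sum, rule delta_span) (use assms(2) in auto)
  then show ?thesis using chain_decomp[OF assms(1)] by simp
qed

end

context kz begin

lemma findim:
  assumes A: "clin A" and comm: "\<And>i x. A (Tj i x) = Tj i (A x)"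
    and finN: "finite GN" and kerN: "\<And>x. A x = 0 \<Longrightarrow> x \<in> V.span GN"
    and finC: "finite GC" and cok: "\<And>x. \<exists>y. x - A y \<in> V.span GC"
    and kill: "\<And>z. z \<in> kcycles smul Tj lam n p \<Longrightarrow> lift A z \<in> Bd p"
  shows "\<exists>G. finite G \<and> kcycles smul Tj lam n p \<subseteq> {b + v | b v. b \<in> Bd p \<and> v \<in> C.span G}"
proof -
  define E0 where "E0 = (\<lambda>(J, g). delta J g) ` (Ps n (Suc p) \<times> GC)"
  have finE0: "finite E0" unfolding E0_def using finite_Ps finC by simp
  define E' where "E' = {c \<in> C.span E0. \<exists>x \<in> kchains n p. d c = lift A x}"
  obtain Bc where Bc: "Bc \<subseteq> E'" "C.independent Bc" "E' \<subseteq> C.span Bc"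
    using C.maximal_independent_subset[of E'] by blast
  have "Bc \<subseteq> C.span E0" using Bc(1) unfolding E'_def by blast
  then have finBc: "finite Bc" using C.independent_span_bound[OF finE0 Bc(2)] by blast
  have "\<forall>b\<in>Bc. \<exists>x. x \<in> kchains n p \<and> d b = lift A x" using Bc(1) unfolding E'_def by blast
  then obtain X where X: "\<And>b. b \<in> Bc \<Longrightarrow> X b \<in> kchains n p \<and> d b = lift A (X b)" by metis
  define N0 where "N0 = (\<lambda>(J, g). delta J g) ` (Ps n p \<times> GN)"
  define G where "G = X ` Bc \<union> N0"
  have finG: "finite G" unfolding G_def N0_def using finBc finite_Ps finN by simp
  have "kcycles smul Tj lam n p \<subseteq> {b + v | b v. b \<in> Bd p \<and> v \<in> C.span G}"
  proof
    fix z assume z: "z \<in> kcycles smul Tj lam n p"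
    then have zc: "z \<in> kchains n p" unfolding kcycles_def by blast
    obtain u where u: "u \<in> kchains n (Suc p)" "lift A z = d u"
      using kill[OF z] unfolding Bd_def by blast
    define y where "y = (\<lambda>J. if J \<in> Ps n (Suc p) then (SOME y. u J - A y \<in> V.span GC) else 0)"
    have hy: "u J - A (y J) \<in> V.span GC" for J
    proof (cases "J \<in> Ps n (Suc p)")
      case True
      then show ?thesis unfolding y_def using someI_ex[OF cok[of "u J"]] by simp
    next
      case False
      then have "u J = 0" using u(1) by (auto simp: kchains_def Ps_def)
      then show ?thesis using False by (simp add: y_def clin_zero[OF A] V.span_zero)
    qed
    have yc: "y \<in> kchains n (Suc p)" unfolding kchains_def y_def Ps_def by auto
    define c where "c = u - lift A y"
    have cc: "c \<in> kchains n (Suc p)" unfolding c_def by (intro chains_diff u(1) chains_lift[OF A yc])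
    have cE0: "c \<in> C.span E0" unfolding E0_def
      by (rule chain_span[OF cc]) (simp add: c_def lift_def hy)
    have dy: "d y \<in> kchains n p" by (rule d_chains[OF yc])
    have dc: "d c = lift A (z - d y)"
      unfolding c_def d_diff d_lift[OF A comm] lift_diff[OF A] u(2) by simp
    have "c \<in> E'" unfolding E'_def using cE0 dc chains_diff[OF zc dy] by blast
    then have "c \<in> C.span Bc" using Bc(3) by blast
    then obtain r where r: "c = (\<Sum>b\<in>Bc. cscale smul (r b) b)"
      using C.span_finite[OF finBc] by blast
    define x where "x = (\<Sum>b\<in>Bc. cscale smul (r b) (X b))"
    have xc: "x \<in> kchains n p" unfolding x_def using X by (intro chains_sum chains_cscale) auto
    have xG: "x \<in> C.span G" unfolding x_def G_def by (intro C.span_sum C.span_scale C.span_base) auto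
    have dcx: "d c = lift A x"
      unfolding r x_def d_sum d_cscale lift_sum[OF A] lift_cscale[OF A] using X by simp
    define wv where "wv = z - d y - x"
    have wc: "wv \<in> kchains n p" unfolding wv_def by (intro chains_diff zc dy xc)
    have "lift A wv = lift A z - lift A (d y) - lift A x"
      unfolding wv_def lift_diff[OF A] by simp
    also have "\<dots> = d u - d (lift A y) - d c" using u(2) d_lift[OF A comm, of y] dcx by simp
    also have "\<dots> = d (u - lift A y - c)" by (simp add: d_diff)
    also have "\<dots> = 0" by (simp add: c_def d_zero)
    finally have "lift A wv = 0" .
    then have "A (wv J) = 0" for J by (metis lift_def zero_fun_apply)
    then have "wv \<in> C.span N0" unfolding N0_def by (intro chain_span[OF wc] kerN)
    then have wG: "wv \<in> C.span G" unfolding G_def by (meson C.span_mono Un_upper2 subsetD)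
    have "z = d y + (x + wv)" unfolding wv_def by simp
    moreover have "d y \<in> Bd p" unfolding Bd_def using yc by blast
    moreover have "x + wv \<in> C.span G" using xG wG by (rule C.span_add)
    ultimately show "z \<in> {b + v | b v. b \<in> Bd p \<and> v \<in> C.span G}" by blast
  qed
  then show ?thesis using finG by blast
qed

end


lemma qdim_zero: "qspans sc B Z {} \<Longrightarrow> qdim sc B Z = 0"
  unfolding qdim_def by (rule Least_eq_0) auto

context cvs begin

lemma large_fredholm:
  assumes T: "bounded_clin smul T"
  shows "\<exists>r>0. \<forall>z. cmod z \<ge> r \<longrightarrow> fredholm_index0 smul (\<lambda>x. smul z x - T x)"
proof -
  have bl: "bounded_linear T" using T unfolding bounded_clin_def by blast
  have TL: "clin T" using bounded_clin_clin[OF T] .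
  obtain K where K: "K > 0" "\<And>x. norm (T x) \<le> norm x * K"
    using bounded_linear.pos_bounded[OF bl] by blast
  have "\<forall>z. cmod z \<ge> K + 1 \<longrightarrow> fredholm_index0 smul (\<lambda>x. smul z x - T x)"
  proof (intro allI impI)
    fix z :: complex assume z: "cmod z \<ge> K + 1"
    then have zpos: "cmod z > K" "z \<noteq> 0" using K by auto
    define A where "A = (\<lambda>x. smul z x - T x)"
    have inj: "x = 0" if "A x = 0" for x
    proof -
      have "smul z x = T x" using that by (simp add: A_def)
      then have "cmod z * norm x \<le> norm x * K" using K(2)[of x] norm_smul[of z x] by metis
      then have "norm x * (cmod z - K) \<le> 0" by (simp add: algebra_simps)
      then have "norm x \<le> 0" using zpos(1) by (simp add: mult_le_0_iff)
      then show "x = 0" by simp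
    qed
    have surj: "\<exists>x. A x = y" for y
    proof -
      define f where "f = (\<lambda>x. smul (inverse z) (y + T x))"
      have c: "0 \<le> K / cmod z" "K / cmod z < 1" using K zpos by (auto simp: divide_simps)
      have "dist (f a) (f b) \<le> (K / cmod z) * dist a b" for a b
      proof -
        have "f a - f b = smul (inverse z) (T (a - b))"
          by (simp add: f_def clin_diff[OF TL] V.scale_right_diff_distrib smul_add)
        then have "dist (f a) (f b) = norm (T (a - b)) / cmod z"
          by (simp add: dist_norm norm_smul norm_inverse divide_inverse mult.commute)
        also have "\<dots> \<le> (norm (a - b) * K) / cmod z"
          using K(2) zpos by (simp add: divide_right_mono)
        finally show ?thesis by (simp add: dist_norm mult.commute)
      qed
      then obtain x where "f x = x" using banach_fix_type[OF c] by blast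
      then have fx: "smul (inverse z) (y + T x) = x" by (simp add: f_def)
      have "smul z (smul (inverse z) (y + T x)) = y + T x" using zpos(2) by (simp add: smul_one)
      then have "smul z x = y + T x" using fx by metis
      then show ?thesis unfolding A_def by (intro exI[of _ x]) simp
    qed
    have q1: "qspans smul {0} {x. A x = 0} {}"
      unfolding qspans_def cspan_V using inj V.span_zero by auto
    have q2: "qspans smul (range A) UNIV {}"
      unfolding qspans_def cspan_V using surj V.span_zero
      by auto (metis add.right_neutral rangeI)
    show "fredholm_index0 smul (\<lambda>x. smul z x - T x)"
      unfolding fredholm_index0_def qfin_def A_def[symmetric]
      using q1 q2 qdim_zero[OF q1] qdim_zero[OF q2] by auto
  qed
  then show ?thesis using K(1) by (intro exI[of _ "K + 1"]) auto
qed

end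

theorem mainTheorem12:
  fixes smul :: "complex \<Rightarrow> 'v::banach \<Rightarrow> 'v"
    and T :: "'h::comm_monoid_add \<Rightarrow> 'v \<Rightarrow> 'v"
    and w :: "nat \<Rightarrow> 'h" and n :: nat and lam :: "nat \<Rightarrow> complex"
  assumes "complex_structure smul"
    and "\<forall>h. \<exists>l. h = msum w l n"
    and "\<forall>h. bounded_clin smul (T h)"
    and "T 0 = id"
    and "\<forall>a b. T (a + b) = T a \<circ> T b"
    and "\<exists>h l. quasi_compact smul (T h) \<and> h = msum w l n \<and>
               cmod (\<Prod>i<n. lam i ^ l i) > ess_rad smul (T h)"
  shows "fredholm_character smul (\<lambda>j. T (w j)) lam n"
proof -
  interpret cvs smul by unfold_locales (rule assms(1))
  interpret kzT smul T w lam n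
    by unfold_locales (use assms(3-5) bounded_clin_clin in auto)
  obtain h l where hl: "h = msum w l n" "cmod (\<Prod>i<n. lam i ^ l i) > ess_rad smul (T h)"
    using assms(6) by blast
  define \<mu> where "\<mu> = (\<Prod>i<n. lam i ^ l i)"
  define R where "R = {r. r > 0 \<and> (\<forall>z. cmod z \<ge> r \<longrightarrow> fredholm_index0 smul (\<lambda>x. smul z x - T h x))}"
  have "R \<noteq> {}" using large_fredholm[of "T h"] assms(3) unfolding R_def by blast
  moreover have "Inf R < cmod \<mu>" using hl(2) unfolding ess_rad_def R_def \<mu>_def by simp
  ultimately obtain r where "r \<in> R" "r < cmod \<mu>" using cInf_lessD by blast
  then have fr: "fredholm_index0 smul (\<lambda>x. smul \<mu> x - T h x)" unfolding R_def by auto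
  define A where "A = (\<lambda>x. smul \<mu> x - T h x)"
  obtain GN where GN: "finite GN" "{x. A x = 0} \<subseteq> {b + v | b v. b \<in> {0} \<and> v \<in> V.span GN}"
    using fr unfolding fredholm_index0_def qfin_def qspans_def A_def cspan_V by blast
  obtain GC where GC: "finite GC" "UNIV \<subseteq> {b + v | b v. b \<in> range A \<and> v \<in> V.span GC}"
    using fr unfolding fredholm_index0_def qfin_def qspans_def A_def cspan_V by blast
  have kerN: "x \<in> V.span GN" if "A x = 0" for x using GN(2) that by auto
  have cok: "\<exists>y. x - A y \<in> V.span GC" for x
  proof -
    obtain b v where "x = b + v" "b \<in> range A" "v \<in> V.span GC" using GC(2) by blast
    then show ?thesis by (metis add_diff_cancel_left' rangeE)
  qed
  have Alin: "clin A" unfolding A_def by (rule clin_minus[OF clin_smul_op Tclin])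
  have comm: "A (T (w i) x) = T (w i) (A x)" for i x
    unfolding A_def by (simp add: clin_diff[OF Tclin] clin_smul[OF Tclin] T_comm)
  have tf: "tor_fin smul (\<lambda>j. T (w j)) lam n p" for p
  proof -
    have kill: "lift A z \<in> Bd p" if z: "z \<in> kcycles smul (\<lambda>j. T (w j)) lam n p" for z
    proof -
      have q: "lift (T h) z - cscale smul \<mu> z \<in> Bd p"
        using Qmsum[of p l] z hl(1) unfolding Q_def \<mu>_def by blast
      have "lift A z = 0 - (lift (T h) z - cscale smul \<mu> z)"
        by (simp add: A_def lift_def cscale_def fun_eq_iff)
      then show ?thesis using Bd_diff[OF Bd_zero q] by simp
    qed
    obtain G where G: "finite G" "kcycles smul (\<lambda>j. T (w j)) lam n p \<subseteq> {b + v | b v. b \<in> Bd p \<and> v \<in> C.span G}"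
      using findim[OF Alin comm GN(1) kerN GC(1) cok kill] by blast
    have sub: "C.subspace (Bd p)"
      unfolding C.subspace_def using Bd_zero Bd_add Bd_cscale by blast
    obtain F where "finite F" "F \<subseteq> kcycles smul (\<lambda>j. T (w j)) lam n p"
      "kcycles smul (\<lambda>j. T (w j)) lam n p \<subseteq> {b + v | b v. b \<in> Bd p \<and> v \<in> C.span F}"
      using qspans_transfer[OF sub G(1) G(2)] by blast
    then show ?thesis
      unfolding tor_fin_def qfin_def qspans_def cspan_C kbounds_def Bd_def[symmetric] by blast
  qed
  have "{p. tor_dim smul (\<lambda>j. T (w j)) lam n p \<noteq> 0} \<subseteq> {..n}"
  proof
    fix p assume p: "p \<in> {p. tor_dim smul (\<lambda>j. T (w j)) lam n p \<noteq> 0}"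
    show "p \<in> {..n}"
    proof (rule ccontr)
      assume "p \<notin> {..n}"
      then have pn: "p > n" by simp
      have "kcycles smul (\<lambda>j. T (w j)) lam n p \<subseteq> {0}"
      proof
        fix c assume "c \<in> kcycles smul (\<lambda>j. T (w j)) lam n p"
        then have c: "c \<in> kchains n p" unfolding kcycles_def by blast
        have "c J = 0" for J
        proof (rule ccontr)
          assume "c J \<noteq> 0"
          then have "J \<subseteq> {..<n}" "card J = p" using c unfolding kchains_def by blast+
          then have "p \<le> n" using card_mono[of "{..<n}" J] by simp
          then show False using pn by simp
        qed
        then show "c \<in> {0}" by (simp add: fun_eq_iff)
      qed
      then have "qspans (cscale smul) (kbounds smul (\<lambda>j. T (w j)) lam n p) (kcycles smul (\<lambda>j. T (w j)) lam n p) {}"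
        unfolding qspans_def cspan_C kbounds_def Bd_def[symmetric] using Bd_zero C.span_zero
        by fastforce
      then have "tor_dim smul (\<lambda>j. T (w j)) lam n p = 0"
        unfolding tor_dim_def by (rule qdim_zero)
      then show False using p by simp
    qed
  qed
  then have "finite {p. tor_dim smul (\<lambda>j. T (w j)) lam n p \<noteq> 0}"
    using finite_subset by blast
  then show ?thesis unfolding fredholm_character_def using tf by blast
qed

end
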